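(* Let $n\in\mathbb N$ and consider the class of non-empty subsets of $\mathbb R^n$ with out-radius at most $1$. On this class, the map $K\mapsto K^c$ is continuous with respect to the Hausdorff metric.
   Context: $B(x,r)$ is the closed Euclidean ball and $B=B(0,1)$. For $A\subseteq\mathbb R^n$, $A^c=\bigcap_{x\in A}B(x,1)$. The out-radius of $A$ is the infimum of $R\ge0$ such that $A\subseteq B(z,R)$ for some $z$. The Hausdorff distance is $d_H(K,L)=\inf\{\lambda\ge0:K\subseteq L+\lambda B,\ L\subseteq K+\lambda B\}$. *)

theory Defs
  imports "HOL-Analysis.Analysis"
begin

definition cdual :: "'a::euclidean_space set \<Rightarrow> 'a set" where
  "cdual A = (\<Inter>x\<in>A. cball x 1)"

text \<open>Out-radius (infimum over the extended reals; it is \<infinity> for unbounded sets).\<close>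
definition outradius :: "'a::euclidean_space set \<Rightarrow> ereal" where
  "outradius A = Inf (ereal ` {R. R \<ge> 0 \<and> (\<exists>z. A \<subseteq> cball z R)})"

text \<open>Hausdorff distance as in the paper: infimum of admissible lambda, with
  K + lambda B written as the Minkowski sum with the closed ball of radius lambda.\<close>
definition dH :: "'a::euclidean_space set \<Rightarrow> 'a set \<Rightarrow> ereal" where
  "dH K L = Inf (ereal ` {r. r \<ge> 0 \<and>
      K \<subseteq> {x + y | x y. x \<in> L \<and> y \<in> cball 0 r} \<and>
      L \<subseteq> {x + y | x y. x \<in> K \<and> y \<in> cball 0 r}})"

end

theory Submission
  imports Defs
begin

lemma sq_identity:
  fixes u v :: "'a::real_inner"
  shows "(norm ((1-t) *\<^sub>R u + t *\<^sub>R v))^2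
         = (1-t)*(norm u)^2 + t*(norm v)^2 - t*(1-t)*(norm (u-v))^2"
  by (simp add: power2_norm_eq_inner inner_add_left inner_add_right inner_diff_left
      inner_diff_right inner_commute algebra_simps)

lemma core:
  fixes x w :: "'a::real_inner"
  assumes hx: "\<forall>b\<in>B. dist x b \<le> 1 + r" and hw: "\<forall>b\<in>B. dist w b \<le> 1"
    and r: "r \<ge> 0" and e: "e > 0" and small: "2*r + r^2 \<le> e^2"
  shows "\<exists>y. (\<forall>b\<in>B. dist y b \<le> 1) \<and> dist x y \<le> e"
proof (cases "dist x w \<le> e")
  case True
  then show ?thesis using hw by blast
next
  case False
  define d where "d = dist x w"
  have dpos: "d > e" using False d_def by simp
  have d2: "d^2 > e^2" using dpos e by (simp add: power_strict_mono)
  define t where "t = (2*r + r^2) / d^2"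
  have t0: "t \<ge> 0" using r unfolding t_def by simp
  have t1: "t \<le> 1" using small d2 unfolding t_def by (simp add: divide_le_eq_1)
  have td: "t * d^2 = 2*r + r^2" using d2 e unfolding t_def
    by (smt (verit) nonzero_eq_divide_eq power2_less_0 zero_le_power2)
  define y where "y = (1-t) *\<^sub>R x + t *\<^sub>R w"
  have "\<forall>b\<in>B. dist y b \<le> 1"
  proof
    fix b assume b: "b \<in> B"
    have eq: "y - b = (1-t) *\<^sub>R (x - b) + t *\<^sub>R (w - b)"
      unfolding y_def by (simp add: algebra_simps)
    have "(norm (y-b))^2 = (1-t)*(norm (x-b))^2 + t*(norm (w-b))^2 - t*(1-t)*(norm (x-w))^2"
      unfolding eq sq_identity by simp
    also have "\<dots> \<le> (1-t)*(1+r)^2 + t*1 - t*(1-t)*d^2"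
    proof -
      have "norm (x-b) \<le> 1 + r" using hx b by (simp add: dist_norm)
      hence "(norm (x-b))^2 \<le> (1+r)^2" by (simp add: power_mono)
      hence A: "(1-t)*(norm (x-b))^2 \<le> (1-t)*(1+r)^2" using t1 by (simp add: mult_left_mono)
      have "norm (w-b) \<le> 1" using hw b by (simp add: dist_norm)
      hence "(norm (w-b))^2 \<le> 1" by (simp add: power_le_one)
      hence B: "t*(norm (w-b))^2 \<le> t*1" using t0 by (metis mult_left_mono)
      have "norm (x-w) = d" by (simp add: d_def dist_norm)
      then show ?thesis using A B by simp
    qed
    also have "\<dots> = 1"
    proof -
      have "t*(1-t)*d^2 = (1-t)*(t*d^2)" by simp
      then show ?thesis unfolding td by (simp add: algebra_simps power2_eq_square)
    qed
    finally have "(norm (y-b))^2 \<le> 1" .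
    then have "norm (y-b) \<le> 1" by (simp add: power_le_one_iff)
    then show "dist y b \<le> 1" by (simp add: dist_norm)
  qed
  moreover have "dist x y \<le> e"
  proof -
    have "x - y = t *\<^sub>R (x - w)" unfolding y_def by (simp add: algebra_simps)
    then have "dist x y = t * d" using t0 by (simp add: dist_norm d_def)
    also have "\<dots> = (2*r+r^2) / d" unfolding t_def using dpos e
      by (simp add: power2_eq_square)
    also have "\<dots> \<le> e^2 / d" using small dpos e by (simp add: divide_right_mono)
    also have "\<dots> \<le> e^2 / e" using dpos e by (simp add: frac_le)
    also have "\<dots> = e" by (simp add: power2_eq_square)
    finally show ?thesis .
  qed
  ultimately show ?thesis by blast
qed


lemma outradius_center:
  fixes B :: "'a::euclidean_space set"
  assumes ne: "B \<noteq> {}" and o: "outradius B \<le> 1"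
  shows "\<exists>z. B \<subseteq> cball z 1"
proof -
  have ex: "\<exists>z. B \<subseteq> cball z R" if R: "R > 1" for R
  proof -
    have "outradius B < ereal R" proof -
      have "ereal 1 < ereal R" using R by simp
      then show ?thesis by (rule le_less_trans[OF o[unfolded one_ereal_def]])
    qed
    then obtain R' z where "R' < R" "B \<subseteq> cball z R'"
      unfolding outradius_def Inf_less_iff by auto
    then show ?thesis using subset_cball[of R' R z] by auto
  qed
  obtain b0 where b0: "b0 \<in> B" using ne by blast
  define Z where "Z R = (\<Inter>b\<in>B. cball b R)" for R
  have Zmem: "z \<in> Z R \<longleftrightarrow> B \<subseteq> cball z R" for z R
    unfolding Z_def by (auto simp: dist_commute subset_eq)
  have "UNIV \<inter> \<Inter>(Z ` {1<..2}) \<noteq> {}"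
  proof (rule closed_imp_fip)
    show "closed (UNIV :: 'a set)" by simp
    show "Z 2 \<in> Z ` {1<..2}" by simp
    show "bounded (Z 2)" unfolding Z_def using b0
      by (meson INF_lower bounded_cball bounded_subset)
    show "\<And>T. T \<in> Z ` {1<..2} \<Longrightarrow> closed T" unfolding Z_def by auto
    show "UNIV \<inter> \<Inter>F' \<noteq> {}" if F': "finite F'" "F' \<subseteq> Z ` {1<..2}" for F'
    proof -
      obtain I where I: "I \<subseteq> {1<..2}" "finite I" "F' = Z ` I"
        using F' finite_subset_image by metis
      show ?thesis
      proof (cases "I = {}")
        case True then show ?thesis using I by simp
      next
        case False
        define R0 where "R0 = Min I"
        have "R0 \<in> I" using False I unfolding R0_def by simp
        then have "R0 > 1" using I by auto
        then obtain z where z: "B \<subseteq> cball z R0" using ex by blast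
        have "z \<in> Z R" if "R \<in> I" for R
        proof -
          have "R0 \<le> R" using that I unfolding R0_def by simp
          then have "B \<subseteq> cball z R" using z subset_cball[of R0 R z] by blast
          then show ?thesis by (simp only: Zmem)
        qed
        then show ?thesis using I by blast
      qed
    qed
  qed
  then obtain z where z: "\<And>R. R \<in> {1<..2} \<Longrightarrow> B \<subseteq> cball z R" using Zmem by blast
  have "B \<subseteq> cball z 1"
  proof
    fix b assume b: "b \<in> B"
    have H: "dist z b \<le> R" if "1 < R" "R \<le> 2" for R using z[of R] that b by auto
    have "dist z b \<le> 1"
    proof (rule ccontr)
      assume n: "\<not> dist z b \<le> 1"
      define R where "R = min 2 ((1 + dist z b)/2)"
      have "1 < R" "R \<le> 2" using n unfolding R_def by auto
      then have "dist z b \<le> R" by (rule H)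
      then show False using n unfolding R_def by auto
    qed
    then show "b \<in> cball z 1" by simp
  qed
  then show ?thesis by blast
qed

lemma transfer:
  fixes A B :: "'a::euclidean_space set"
  assumes sub: "B \<subseteq> {x + y | x y. x \<in> A \<and> y \<in> cball 0 r}" and zb: "B \<subseteq> cball zb 1"
    and r: "r \<ge> 0" and e: "e > 0" and small: "2*r + r^2 \<le> e^2"
  shows "cdual A \<subseteq> {x + y | x y. x \<in> cdual B \<and> y \<in> cball 0 e}"
proof
  fix x assume x: "x \<in> cdual A"
  have hx: "\<forall>b\<in>B. dist x b \<le> 1 + r"
  proof
    fix b assume "b \<in> B"
    then obtain a u where au: "b = a + u" "a \<in> A" "norm u \<le> r" using sub by auto
    have "dist a x \<le> 1" using x au(2) unfolding cdual_def by auto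
    moreover have "dist x b \<le> dist x a + dist a b" by (rule dist_triangle)
    moreover have "dist a b = norm u" using au by (simp add: dist_norm)
    ultimately show "dist x b \<le> 1 + r" using au(3) by (simp add: dist_commute)
  qed
  have hw: "\<forall>b\<in>B. dist zb b \<le> 1" using zb by auto
  obtain y where y: "\<forall>b\<in>B. dist y b \<le> 1" "dist x y \<le> e"
    using core[OF hx hw r e small] by blast
  have "y \<in> cdual B" using y(1) unfolding cdual_def by (auto simp: dist_commute)
  moreover have "x - y \<in> cball 0 e" proof -
    have "norm (x - y) \<le> e" using y(2) by (simp add: dist_norm)
    then show ?thesis by (simp only: mem_cball_0)
  qed
  moreover have "x = y + (x - y)" by simp
  ultimately show "x \<in> {x + y | x y. x \<in> cdual B \<and> y \<in> cball 0 e}" by blast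
qed

theorem corollary2p10:
  fixes C :: "(real ^ 'n) set set"
  defines "C \<equiv> {A. A \<noteq> {} \<and> outradius A \<le> 1}"
  shows "\<forall>A\<in>C. \<forall>\<epsilon>>0. \<exists>\<delta>>0. \<forall>B\<in>C.
           dH A B < ereal \<delta> \<longrightarrow> dH (cdual A) (cdual B) < ereal \<epsilon>"
proof (intro ballI allI impI)
  fix A and \<epsilon> :: real assume AC: "A \<in> C" and ep: "\<epsilon> > 0"
  define \<delta> where "\<delta> = min 1 (\<epsilon>^2/12)"
  have dpos: "\<delta> > 0" using ep unfolding \<delta>_def by simp
  show "\<exists>\<delta>>0. \<forall>B\<in>C. dH A B < ereal \<delta> \<longrightarrow> dH (cdual A) (cdual B) < ereal \<epsilon>"
  proof (intro exI[of _ \<delta>] conjI dpos ballI impI)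
    fix B assume BC: "B \<in> C" and d: "dH A B < ereal \<delta>"
    obtain x where "x \<in> ereal ` {r. r \<ge> 0 \<and>
      A \<subseteq> {x + y | x y. x \<in> B \<and> y \<in> cball 0 r} \<and>
      B \<subseteq> {x + y | x y. x \<in> A \<and> y \<in> cball 0 r}}" "x < ereal \<delta>"
      using d unfolding dH_def Inf_less_iff by blast
    then obtain r where r: "r \<ge> 0" "r < \<delta>"
      "A \<subseteq> {x + y | x y. x \<in> B \<and> y \<in> cball 0 r}"
      "B \<subseteq> {x + y | x y. x \<in> A \<and> y \<in> cball 0 r}" by auto
    obtain za where za: "A \<subseteq> cball za 1" using outradius_center AC unfolding C_def by blast
    obtain zb where zb: "B \<subseteq> cball zb 1" using outradius_center BC unfolding C_def by blast
    have e2: "\<epsilon>/2 > 0" using ep by simp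
    have small: "2*r + r^2 \<le> (\<epsilon>/2)^2"
    proof -
      have "r \<le> 1" "r \<le> \<epsilon>^2/12" using r unfolding \<delta>_def by auto
      then have "r^2 \<le> r" using r(1) unfolding power2_eq_square by (simp add: mult_left_le)
      then show ?thesis using \<open>r \<le> \<epsilon>^2/12\<close> by (simp add: power_divide)
    qed
    have s1: "cdual A \<subseteq> {x + y | x y. x \<in> cdual B \<and> y \<in> cball 0 (\<epsilon>/2)}"
      by (rule transfer[OF r(4) zb r(1) e2 small])
    have s2: "cdual B \<subseteq> {x + y | x y. x \<in> cdual A \<and> y \<in> cball 0 (\<epsilon>/2)}"
      by (rule transfer[OF r(3) za r(1) e2 small])
    have "dH (cdual A) (cdual B) \<le> ereal (\<epsilon>/2)"
      unfolding dH_def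
    proof (rule Inf_lower, rule imageI, intro CollectI conjI)
      show "0 \<le> \<epsilon>/2" using e2 by simp
    qed (rule s1, rule s2)
    also have "\<dots> < ereal \<epsilon>" using ep by simp
    finally show "dH (cdual A) (cdual B) < ereal \<epsilon>" .
  qed
qed

end
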